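(* For any constant $\alpha\ge1$, the class of parity functions is exactly learnable under $\alpha$-log-Lipschitz distributions.
   Context: Parity functions on $\{0,1\}^n$ are $f_I(x)=\left(\sum_{i\in I}x_i\right)\bmod 2$ for $I\subseteq[n]$. A distribution $D$ on $\{0,1\}^n$ is $\alpha$-log-Lipschitz if $|\log D(x)-\log D(x')|\le\log\alpha$ whenever $x,x'$ differ in exactly one bit. Exact learnability under a class of distributions means: there is an algorithm which, for every $n$, every target parity $c$, every distribution $D$ in the class and every $\delta>0$, given a number of i.i.d. examples from $D$ labelled by $c$ that is polynomial in $n$ and $1/\delta$, outputs with probability at least $1-\delta$ a hypothesis $h$ with $h(x)=c(x)$ for all $x\in\{0,1\}^n$. *)

theory Defs
  imports "HOL-Probability.Probability"
begin

definition cube :: "nat \<Rightarrow> bool list set" where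
  "cube n = {x. length x = n}"

definition parity :: "nat set \<Rightarrow> bool list \<Rightarrow> bool" where
  "parity I x = odd (card {i \<in> I. i < length x \<and> x ! i})"

definition differ_in_one_bit :: "bool list \<Rightarrow> bool list \<Rightarrow> bool" where
  "differ_in_one_bit x y \<longleftrightarrow> length x = length y \<and>
     card {i. i < length x \<and> x ! i \<noteq> y ! i} = 1"

text \<open>alpha-log-Lipschitz distribution on {0,1}^n (log of a probability must be defined,
  so D has full support on the cube).\<close>
definition log_lipschitz :: "real \<Rightarrow> nat \<Rightarrow> bool list pmf \<Rightarrow> bool" where
  "log_lipschitz \<alpha> n D \<longleftrightarrow> set_pmf D \<subseteq> cube n \<and> (\<forall>x\<in>cube n. pmf D x > 0) \<and>
     (\<forall>x\<in>cube n. \<forall>y\<in>cube n. differ_in_one_bit x y \<longrightarrow>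
        \<bar>ln (pmf D x) - ln (pmf D y)\<bar> \<le> ln \<alpha>)"

fun iid_samples :: "'a pmf \<Rightarrow> nat \<Rightarrow> 'a list pmf" where
  "iid_samples D 0 = return_pmf []"
| "iid_samples D (Suc m) = bind_pmf D (\<lambda>x. map_pmf (\<lambda>xs. x # xs) (iid_samples D m))"

definition labelled_samples :: "'a pmf \<Rightarrow> ('a \<Rightarrow> bool) \<Rightarrow> nat \<Rightarrow> ('a \<times> bool) list pmf" where
  "labelled_samples D c m = map_pmf (map (\<lambda>x. (x, c x))) (iid_samples D m)"

definition poly_sample_size :: "(nat \<Rightarrow> real \<Rightarrow> nat) \<Rightarrow> bool" where
  "poly_sample_size m \<longleftrightarrow> (\<exists>C k. \<forall>n \<delta>. \<delta> > 0 \<longrightarrow>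
      real (m n \<delta>) \<le> C * (real n + 1 / \<delta> + 1) ^ k)"

end

theory Submission
  imports Defs
begin

lemma iid_prob:
  "measure_pmf.prob (iid_samples D m) {xs. \<forall>x\<in>set xs. x \<in> A} = measure_pmf.prob D A ^ m"
proof (induction m)
  case 0
  then show ?case by simp
next
  case (Suc m)
  let ?Q = "iid_samples D m"
  let ?E = "{xs. \<forall>x\<in>set xs. x \<in> A}"
  have pre: "\<And>x. (Cons x) -` ?E = (if x \<in> A then ?E else {})" by auto
  have "emeasure (iid_samples D (Suc m)) ?E = (\<integral>\<^sup>+x. emeasure ?Q ((Cons x) -` ?E) \<partial>D)"
    by simp
  also have "\<dots> = (\<integral>\<^sup>+x. emeasure ?Q ?E * indicator A x \<partial>D)"
    by (intro nn_integral_cong) (simp add: pre indicator_def)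
  also have "\<dots> = emeasure ?Q ?E * emeasure D A"
    by (simp add: nn_integral_cmult)
  also have "\<dots> = ennreal (measure_pmf.prob D A ^ Suc m)"
    by (simp add: measure_pmf.emeasure_eq_measure Suc ennreal_mult' mult.commute)
  finally show ?case by (simp add: measure_pmf.emeasure_eq_measure)
qed

definition flip :: "nat \<Rightarrow> bool list \<Rightarrow> bool list" where
  "flip i x = x[i := \<not> x ! i]"

lemma parity_flip:
  assumes "i < length x"
  shows "parity K (flip i x) = (if i \<in> K then \<not> parity K x else parity K x)"
proof -
  let ?S = "{j\<in>K. j < length x \<and> x ! j}"
  let ?S' = "{j\<in>K. j < length x \<and> flip i x ! j}"
  have fin: "finite ?S" by (rule finite_subset[of _ "{..<length x}"]) auto
  show ?thesis
  proof (cases "i \<in> K")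
    case False
    then have "?S' = ?S" unfolding flip_def using assms by (auto simp: nth_list_update)
    then show ?thesis using False by (simp add: parity_def flip_def)
  next
    case True
    show ?thesis
    proof (cases "x ! i")
      case xi: True
      have "?S = insert i ?S'" unfolding flip_def using assms xi True by (auto simp: nth_list_update)
      moreover have "i \<notin> ?S'" unfolding flip_def using assms xi by (auto simp: nth_list_update)
      moreover have "finite ?S'" by (rule finite_subset[of _ "{..<length x}"]) auto
      ultimately have "card ?S = Suc (card ?S')" by simp
      then show ?thesis using True by (simp add: parity_def flip_def)
    next
      case xi: False
      have "?S' = insert i ?S" unfolding flip_def using assms xi True by (auto simp: nth_list_update)
      moreover have "i \<notin> ?S" using xi by auto
      ultimately have "card ?S' = Suc (card ?S)" using fin by simp
      then show ?thesis using True by (simp add: parity_def flip_def)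
    qed
  qed
qed

lemma finite_cube: "finite (cube n)"
proof -
  have "cube n = {xs. set xs \<subseteq> UNIV \<and> length xs = n}" by (auto simp: cube_def)
  then show ?thesis using finite_lists_length_eq[of "UNIV :: bool set" n] by simp
qed

lemma flip_cube: "x \<in> cube n \<Longrightarrow> flip i x \<in> cube n"
  by (simp add: cube_def flip_def)

lemma flip_flip: "flip i (flip i x) = x"
  by (cases "i < length x") (simp_all add: flip_def list_update_beyond not_less)

lemma differ_flip:
  assumes "i < length x" shows "differ_in_one_bit x (flip i x)"
proof -
  have "{j. j < length x \<and> x ! j \<noteq> flip i x ! j} = {i}"
    using assms by (auto simp: flip_def nth_list_update)
  then show ?thesis unfolding differ_in_one_bit_def by (simp add: flip_def)
qed

lemma pmf_flip_le:
  assumes a1: "\<alpha> \<ge> 1" and LL: "log_lipschitz \<alpha> n D" and x: "x \<in> cube n" and i: "i < n"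
  shows "pmf D x \<le> \<alpha> * pmf D (flip i x)"
proof -
  have fx: "flip i x \<in> cube n" using x by (rule flip_cube)
  have pos: "pmf D x > 0" "pmf D (flip i x) > 0" using LL x fx unfolding log_lipschitz_def by blast+
  have "differ_in_one_bit x (flip i x)" using x i by (intro differ_flip) (simp add: cube_def)
  then have "\<bar>ln (pmf D x) - ln (pmf D (flip i x))\<bar> \<le> ln \<alpha>" using LL x fx unfolding log_lipschitz_def by blast
  then have "ln (pmf D x) \<le> ln \<alpha> + ln (pmf D (flip i x))" by linarith
  moreover have apos: "\<alpha> > 0" using a1 by simp
  ultimately have "ln (pmf D x) \<le> ln (\<alpha> * pmf D (flip i x))" using pos by (simp add: ln_mult)
  then show ?thesis using pos apos by (subst (asm) ln_le_cancel_iff) auto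
qed


lemma hyper:
  assumes a1: "\<alpha> \<ge> 1" and LL: "log_lipschitz \<alpha> n D"
    and J: "J \<subseteq> {..<n}" and I: "I \<subseteq> {..<n}" and JI: "J \<noteq> I"
  shows "measure_pmf.prob D {x. parity J x = parity I x} \<le> \<alpha> / (1 + \<alpha>)"
proof -
  obtain i where iJI: "(i \<in> J) \<noteq> (i \<in> I)" using JI by blast
  then have i: "i < n" using I J by auto
  define H where "H = {x \<in> cube n. parity J x = parity I x}"
  define C where "C = cube n - H"
  have sp: "set_pmf D \<subseteq> cube n" using LL by (simp add: log_lipschitz_def)
  have fin: "finite (cube n)" by (rule finite_cube)
  have finH: "finite H" "finite C" using fin by (auto simp: H_def C_def)
  have "measure_pmf.prob D {x. parity J x = parity I x} = measure_pmf.prob D ({x. parity J x = parity I x} \<inter> set_pmf D)"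
    by (simp add: measure_Int_set_pmf)
  also have "{x. parity J x = parity I x} \<inter> set_pmf D = H \<inter> set_pmf D" using sp by (auto simp: H_def)
  also have "measure_pmf.prob D (H \<inter> set_pmf D) = measure_pmf.prob D H" by (simp add: measure_Int_set_pmf)
  finally have pH: "measure_pmf.prob D {x. parity J x = parity I x} = measure_pmf.prob D H" .
  have one: "measure_pmf.prob D (cube n) = 1"
    using sp by (subst measure_pmf.prob_eq_1) (auto simp: AE_measure_pmf_iff)
  have "measure_pmf.prob D (cube n) = measure_pmf.prob D H + measure_pmf.prob D C"
  proof -
    have "cube n = H \<union> C" "H \<inter> C = {}" by (auto simp: H_def C_def)
    then show ?thesis by (simp add: measure_pmf.finite_measure_Union)
  qed
  then have HC: "measure_pmf.prob D H + measure_pmf.prob D C = 1" using one by simp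
  have flipHC: "flip i ` H \<subseteq> C"
  proof
    fix y assume "y \<in> flip i ` H"
    then obtain x where x: "x \<in> H" "y = flip i x" by blast
    then have xc: "x \<in> cube n" by (simp add: H_def)
    then have il: "i < length x" using i by (simp add: cube_def)
    have "parity J y \<noteq> parity I y" using x iJI il by (auto simp: H_def parity_flip)
    then show "y \<in> C" using flip_cube[OF xc] x by (simp add: C_def H_def)
  qed
  have injf: "inj_on (flip i) H" by (metis flip_flip inj_on_inverseI)
  have "measure_pmf.prob D H = sum (pmf D) H" using finH by (simp add: measure_measure_pmf_finite)
  also have "\<dots> \<le> sum (\<lambda>x. \<alpha> * pmf D (flip i x)) H"
    by (intro sum_mono pmf_flip_le[OF a1 LL _ i]) (simp add: H_def)
  also have "\<dots> = \<alpha> * sum (pmf D) (flip i ` H)"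
    by (simp add: sum_distrib_left sum.reindex[OF injf])
  also have "\<dots> \<le> \<alpha> * sum (pmf D) C"
    using a1 flipHC finH by (intro mult_left_mono sum_mono2) auto
  also have "\<dots> = \<alpha> * measure_pmf.prob D C" using finH by (simp add: measure_measure_pmf_finite)
  finally have le: "measure_pmf.prob D H \<le> \<alpha> * measure_pmf.prob D C" .
  have "measure_pmf.prob D C = 1 - measure_pmf.prob D H" using HC by linarith
  then have "measure_pmf.prob D H \<le> \<alpha> * (1 - measure_pmf.prob D H)" using le by simp
  then have "measure_pmf.prob D H * (1 + \<alpha>) \<le> \<alpha>" by (simp add: algebra_simps)
  then show ?thesis using pH a1 by (simp add: le_divide_eq)
qed


lemma numeric:
  fixes \<alpha> \<delta> :: real and n M :: nat
  assumes a1: "\<alpha> \<ge> 1" and d: "\<delta> > 0"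
    and M: "real M \<ge> (real n + 1 / \<delta>) / ln ((1 + \<alpha>) / \<alpha>)"
  shows "2 ^ n * (\<alpha> / (1 + \<alpha>)) ^ M \<le> \<delta>"
proof -
  define r where "r = ln ((1 + \<alpha>) / \<alpha>)"
  define q where "q = \<alpha> / (1 + \<alpha>)"
  have r: "r > 0" using a1 by (simp add: r_def)
  have q: "q > 0" using a1 by (simp add: q_def)
  have lnq: "ln q = - r" using a1 by (simp add: q_def r_def ln_div)
  have e2: "exp (ln (q ^ M)) = q ^ M" using q by (intro exp_ln zero_less_power)
  have "q ^ M = exp (real M * ln q)" using e2 by (simp only: ln_realpow)
  also have "\<dots> = exp (- (real M * r))" by (simp add: lnq)
  also have "\<dots> \<le> exp (- (real n + 1 / \<delta>))"
  proof -
    have "real n + 1 / \<delta> \<le> real M * r" using M r unfolding r_def by (simp add: divide_le_eq)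
    then show ?thesis by simp
  qed
  finally have qM: "q ^ M \<le> exp (- real n) * exp (- (1 / \<delta>))" by (simp add: exp_add[symmetric])
  have two: "(2::real) ^ n \<le> exp (real n)"
  proof -
    have "(2::real) \<le> exp 1" using exp_ge_add_one_self[of 1] by simp
    then have "(2::real) ^ n \<le> exp 1 ^ n" by (intro power_mono) auto
    then show ?thesis by (simp add: exp_of_nat_mult[symmetric])
  qed
  have ed: "exp (- (1 / \<delta>)) \<le> \<delta>"
  proof -
    have "1 / \<delta> \<le> exp (1 / \<delta>)" using exp_ge_add_one_self[of "1/\<delta>"] by linarith
    then have "1 \<le> \<delta> * exp (1 / \<delta>)" using d by (simp add: divide_le_eq mult.commute)
    then show ?thesis by (simp add: exp_minus field_simps)
  qed
  have "2 ^ n * q ^ M \<le> exp (real n) * (exp (- real n) * exp (- (1 / \<delta>)))"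
    using two qM q by (intro mult_mono) auto
  also have "\<dots> = exp (- (1 / \<delta>))" by (simp add: exp_minus)
  also have "\<dots> \<le> \<delta>" by (rule ed)
  finally show ?thesis unfolding q_def .
qed


definition learner :: "nat \<Rightarrow> real \<Rightarrow> (bool list \<times> bool) list \<Rightarrow> (bool list \<Rightarrow> bool)" where
  "learner n \<delta> S = parity (SOME J. J \<subseteq> {..<n} \<and> (\<forall>p\<in>set S. parity J (fst p) = snd p))"

lemma main_prob:
  assumes a1: "\<alpha> \<ge> 1" and LL: "log_lipschitz \<alpha> n D" and I: "I \<subseteq> {..<n}" and d: "\<delta> > 0"
    and M: "real M \<ge> (real n + 1 / \<delta>) / ln ((1 + \<alpha>) / \<alpha>)"
  shows "measure_pmf.prob (map_pmf (learner n \<delta>) (labelled_samples D (parity I) M))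
                {h. \<forall>x\<in>cube n. h x = parity I x} \<ge> 1 - \<delta>"
proof -
  define P0 where "P0 = iid_samples D M"
  define f where "f = (\<lambda>x::bool list. (x, parity I x))"
  define G where "G = {h. \<forall>x\<in>cube n. h x = parity I x}"
  define A where "A = map f -` (learner n \<delta> -` G)"
  define E where "E = (\<lambda>J. {xs. \<forall>x\<in>set xs. x \<in> {x. parity J x = parity I x}})"
  define Js where "Js = Pow {..<n} - {I}"
  have lhs: "measure_pmf.prob (map_pmf (learner n \<delta>) (labelled_samples D (parity I) M)) G
      = measure_pmf.prob P0 A"
    by (simp add: labelled_samples_def P0_def A_def f_def)
  have sub: "UNIV - A \<subseteq> (\<Union>J\<in>Js. E J)"
  proof
    fix xs assume xs: "xs \<in> UNIV - A"
    define Q where "Q = (\<lambda>J. J \<subseteq> {..<n} \<and> (\<forall>p\<in>set (map f xs). parity J (fst p) = snd p))"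
    have "Q I" using I by (auto simp: Q_def f_def)
    then have QJ: "Q (SOME J. Q J)" by (rule someI)
    define J0 where "J0 = (SOME J. Q J)"
    have "learner n \<delta> (map f xs) = parity J0" by (simp add: learner_def J0_def Q_def)
    then have "parity J0 \<notin> G" using xs by (simp add: A_def)
    then have "J0 \<noteq> I" by (auto simp: G_def)
    moreover have "J0 \<subseteq> {..<n}" using QJ by (simp add: Q_def J0_def)
    moreover have "xs \<in> E J0" using QJ by (auto simp: Q_def J0_def E_def f_def)
    ultimately show "xs \<in> (\<Union>J\<in>Js. E J)" by (auto simp: Js_def)
  qed
  have finJs: "finite Js" by (simp add: Js_def)
  have "measure_pmf.prob P0 (UNIV - A) \<le> measure_pmf.prob P0 (\<Union>J\<in>Js. E J)"
    using sub by (intro measure_pmf.finite_measure_mono) auto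
  also have "\<dots> \<le> (\<Sum>J\<in>Js. measure_pmf.prob P0 (E J))"
    using finJs by (intro measure_pmf.finite_measure_subadditive_finite) auto
  also have "\<dots> = (\<Sum>J\<in>Js. measure_pmf.prob D {x. parity J x = parity I x} ^ M)"
    unfolding E_def P0_def by (intro sum.cong refl iid_prob)
  also have "\<dots> \<le> (\<Sum>J\<in>Js. (\<alpha> / (1 + \<alpha>)) ^ M)"
  proof (intro sum_mono power_mono)
    fix J assume "J \<in> Js"
    then show "measure_pmf.prob D {x. parity J x = parity I x} \<le> \<alpha> / (1 + \<alpha>)"
      using hyper[OF a1 LL _ I] by (auto simp: Js_def)
  qed simp
  also have "\<dots> = real (card Js) * (\<alpha> / (1 + \<alpha>)) ^ M" by simp
  also have "\<dots> \<le> 2 ^ n * (\<alpha> / (1 + \<alpha>)) ^ M"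
  proof -
    have "card Js \<le> card (Pow {..<n::nat})" unfolding Js_def by (intro card_mono) auto
    also have "\<dots> = 2 ^ n" by (simp add: card_Pow)
    finally have "real (card Js) \<le> 2 ^ n" by (metis of_nat_le_iff of_nat_numeral of_nat_power)
    then show ?thesis using a1 by (intro mult_right_mono) auto
  qed
  also have "\<dots> \<le> \<delta>" by (rule numeric[OF a1 d M])
  finally have B: "measure_pmf.prob P0 (UNIV - A) \<le> \<delta>" .
  have "measure_pmf.prob P0 (UNIV - A) = 1 - measure_pmf.prob P0 A"
    using measure_pmf.prob_compl[of A P0] by simp
  then show ?thesis using B lhs by (simp add: G_def)
qed

theorem theorem5p1:
  fixes \<alpha> :: real
  assumes "\<alpha> \<ge> 1"
  shows "\<exists>(L :: nat \<Rightarrow> real \<Rightarrow> (bool list \<times> bool) list \<Rightarrow> (bool list \<Rightarrow> bool))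
            (m :: nat \<Rightarrow> real \<Rightarrow> nat).
           poly_sample_size m \<and>
           (\<forall>n I D \<delta>. I \<subseteq> {..<n} \<longrightarrow> log_lipschitz \<alpha> n D \<longrightarrow> \<delta> > 0 \<longrightarrow>
              measure_pmf.prob (map_pmf (L n \<delta>) (labelled_samples D (parity I) (m n \<delta>)))
                {h. \<forall>x\<in>cube n. h x = parity I x} \<ge> 1 - \<delta>)"
proof -
  define r where "r = ln ((1 + \<alpha>) / \<alpha>)"
  have r: "r > 0" using assms by (simp add: r_def)
  define m where "m = (\<lambda>(n::nat) (\<delta>::real). nat \<lceil>(real n + 1 / \<delta>) / r\<rceil>)"
  have poly: "poly_sample_size m"
    unfolding poly_sample_size_def
  proof (intro exI allI impI)
    fix n :: nat and \<delta> :: real assume d: "\<delta> > 0"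
    have t0: "(real n + 1 / \<delta>) / r \<ge> 0" using d r by simp
    have "real (m n \<delta>) \<le> (real n + 1 / \<delta>) / r + 1"
      unfolding m_def using t0 by (simp add: of_nat_nat)
    also have "\<dots> \<le> (1 / r + 1) * (real n + 1 / \<delta> + 1)"
    proof -
      have "(real n + 1 / \<delta>) / r \<le> (1 / r) * (real n + 1 / \<delta> + 1)"
        using r by (simp add: divide_right_mono)
      moreover have "1 \<le> real n + 1 / \<delta> + 1" using d by simp
      ultimately show ?thesis by (simp add: distrib_right)
    qed
    finally show "real (m n \<delta>) \<le> (1 / r + 1) * (real n + 1 / \<delta> + 1) ^ 1" by simp
  qed
  show ?thesis
  proof (intro exI conjI allI impI)
    show "poly_sample_size m" by (rule poly)
  next
    fix n I D \<delta>
    assume I: "I \<subseteq> {..<(n::nat)}" and LL: "log_lipschitz \<alpha> n D" and d: "(\<delta>::real) > 0"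
    have "real (m n \<delta>) \<ge> (real n + 1 / \<delta>) / ln ((1 + \<alpha>) / \<alpha>)"
      unfolding m_def r_def[symmetric] by (rule real_nat_ceiling_ge)
    then show "measure_pmf.prob (map_pmf (learner n \<delta>) (labelled_samples D (parity I) (m n \<delta>)))
                {h. \<forall>x\<in>cube n. h x = parity I x} \<ge> 1 - \<delta>"
      by (rule main_prob[OF assms LL I d])
  qed
qed

end
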